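(* With $D$, $S$ and $A$ as in the context, the restriction map $\mathrm{Res}:\mathrm{Der}(D,A)\to\mathrm{Der}(\Phi(D),S)$, $\tau\mapsto\tau|_{\Phi(D)}$, is well defined and surjective.
   Context: $p$ is an odd prime, $d\geq 2$. $D=\langle y_1,\dots,y_d\rangle$ is a finite $p$-group of exponent $p$ and class $2$ with $|D/\Phi(D)|=p^d$ and $|\Phi(D)/\gamma_3(D)|=p^{\binom d2}$. $S=\langle a\rangle\cong\mathrm{F}_p$ is the trivial $D$-module; $\delta_j:D\to S$ is the homomorphism with $\delta_j(y_j)=a$, $\delta_j(y_i)=0$ ($i\ne j$). $A=S\oplus\bigoplus_{i=1}^d\langle r_i\rangle$, $\langle r_i\rangle\cong\mathrm{F}_p$, with action $(la+\sum_ik_ir_i)^g=la+\sum_ik_i(r_i-\delta_i(g))$. Since $\Phi(D)$ acts trivially on $S$, $\mathrm{Der}(\Phi(D),S)=\mathrm{Hom}(\Phi(D),S)$. *)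

theory Defs
  imports "HOL-Algebra.Algebra"
begin

definition maximal_subgroup :: "'a set \<Rightarrow> ('a, 'b) monoid_scheme \<Rightarrow> bool" where
  "maximal_subgroup H G \<longleftrightarrow> subgroup H G \<and> H \<noteq> carrier G \<and>
     (\<forall>K. subgroup K G \<and> H \<subseteq> K \<longrightarrow> K = H \<or> K = carrier G)"

definition frattini :: "('a, 'b) monoid_scheme \<Rightarrow> 'a set" where
  "frattini G = carrier G \<inter> \<Inter> {H. maximal_subgroup H G}"

definition gamma2 :: "('a, 'b) monoid_scheme \<Rightarrow> 'a set" where
  "gamma2 G = derived G (carrier G)"

definition gamma3 :: "('a, 'b) monoid_scheme \<Rightarrow> 'a set" where
  "gamma3 G = generate G (\<Union>x\<in>gamma2 G. \<Union>g\<in>carrier G.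
      {x \<otimes>\<^bsub>G\<^esub> g \<otimes>\<^bsub>G\<^esub> inv\<^bsub>G\<^esub> x \<otimes>\<^bsub>G\<^esub> inv\<^bsub>G\<^esub> g})"

(* The module A = S (+) <r_1> (+) ... (+) <r_d> over F_p.
   An element  l a + sum_i k_i r_i  is represented by the pair (l, k) with
   l in {0..<p}, k i in {0..<p} for i in {1..d}, and k i = 0 otherwise. *)
definition A_carrier :: "nat \<Rightarrow> nat \<Rightarrow> (int \<times> (nat \<Rightarrow> int)) set" where
  "A_carrier p d = {(l, k). l \<in> {0..<int p} \<and> (\<forall>i\<in>{1..d}. k i \<in> {0..<int p})
                            \<and> (\<forall>i. i \<notin> {1..d} \<longrightarrow> k i = 0)}"

definition S_carrier :: "nat \<Rightarrow> nat \<Rightarrow> (int \<times> (nat \<Rightarrow> int)) set" where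
  "S_carrier p d = {(l, k). l \<in> {0..<int p} \<and> (\<forall>i. k i = 0)}"

definition A_add :: "nat \<Rightarrow> nat \<Rightarrow> int \<times> (nat \<Rightarrow> int) \<Rightarrow> int \<times> (nat \<Rightarrow> int) \<Rightarrow> int \<times> (nat \<Rightarrow> int)" where
  "A_add p d u v = ((fst u + fst v) mod int p,
                    (\<lambda>i. if i \<in> {1..d} then (snd u i + snd v i) mod int p else 0))"

(* right action: (l a + sum_i k_i r_i)^g = l a + sum_i k_i (r_i - delta_i(g)),
   delta_i(g) being identified with its coefficient in F_p (delta_i g * a) *)
definition A_act :: "nat \<Rightarrow> nat \<Rightarrow> (nat \<Rightarrow> 'g \<Rightarrow> int) \<Rightarrow> int \<times> (nat \<Rightarrow> int) \<Rightarrow> 'g \<Rightarrow> int \<times> (nat \<Rightarrow> int)" where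
  "A_act p d \<delta> u g = ((fst u - (\<Sum>i\<in>{1..d}. snd u i * \<delta> i g)) mod int p, snd u)"

definition is_derivation ::
  "('g, 'b) monoid_scheme \<Rightarrow> 'g set \<Rightarrow> 'm set \<Rightarrow> ('m \<Rightarrow> 'm \<Rightarrow> 'm) \<Rightarrow> ('m \<Rightarrow> 'g \<Rightarrow> 'm) \<Rightarrow> ('g \<Rightarrow> 'm) \<Rightarrow> bool" where
  "is_derivation G H M addM act \<tau> \<longleftrightarrow>
     (\<forall>g\<in>H. \<tau> g \<in> M) \<and>
     (\<forall>g\<in>H. \<forall>h\<in>H. \<tau> (g \<otimes>\<^bsub>G\<^esub> h) = addM (act (\<tau> g) h) (\<tau> h))"

end

theory Submission imports Defs begin


definition addhom :: "('g,'b) monoid_scheme \<Rightarrow> nat \<Rightarrow> 'g set \<Rightarrow> ('g \<Rightarrow> int) \<Rightarrow> bool" where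
  "addhom G p H f \<longleftrightarrow> (\<forall>g\<in>H. f g \<in> {0..<int p}) \<and>
      (\<forall>g\<in>H. \<forall>h\<in>H. f (g \<otimes>\<^bsub>G\<^esub> h) = (f g + f h) mod int p)"

lemma modp_self_dbl: fixes a P :: int assumes "0 \<le> a" "a < P" "a = (a + a) mod P" shows "a = 0"
proof (cases "a + a < P")
  case True then show ?thesis using assms by simp
next
  case False
  have "(a + a) mod P = ((a + a - P) + P) mod P" by simp
  also have "\<dots> = (a + a - P) mod P" by (rule mod_add_self2)
  also have "\<dots> = a + a - P" using False assms by (intro mod_pos_pos_trivial) linarith+
  finally show ?thesis using assms by linarith
qed

context group begin

lemma sg_pow: assumes "subgroup H G" "g \<in> H" shows "g [^] (n::nat) \<in> H"
proof (induction n)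
  case 0 show ?case using assms(1) subgroup.one_closed by simp
next
  case (Suc n) show ?case using Suc assms subgroup.m_closed by (metis nat_pow_Suc)
qed

lemma addhom_one: assumes "addhom G p H f" "subgroup H G" shows "f \<one> = 0"
proof -
  have "\<one> \<in> H" using subgroup.one_closed[OF assms(2)] .
  hence h1: "f (\<one> \<otimes> \<one>) = (f \<one> + f \<one>) mod int p" and r: "f \<one> \<in> {0..<int p}"
    using assms(1) unfolding addhom_def by blast+
  have e: "f \<one> = (f \<one> + f \<one>) mod int p" using h1 by (simp only: l_one one_closed)
  show ?thesis using modp_self_dbl[of "f \<one>" "int p", OF _ _ e] r by simp
qed

lemma addhom_pow: assumes "addhom G p H f" "subgroup H G" "g \<in> H"
  shows "f (g [^] (n::nat)) = (int n * f g) mod int p"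
proof (induction n)
  case 0 then show ?case using addhom_one[OF assms(1,2)] by simp
next
  case (Suc n)
  have gn: "g [^] n \<in> H" using assms by (simp add: sg_pow)
  have "f (g [^] Suc n) = (f (g [^] n) + f g) mod int p" using assms(1,3) gn unfolding addhom_def by simp
  also have "\<dots> = ((int n * f g) mod int p + f g) mod int p" using Suc by simp
  also have "\<dots> = (int n * f g + f g) mod int p" by (rule mod_add_left_eq)
  also have "\<dots> = (int (Suc n) * f g) mod int p"
    by (rule arg_cong[where f="\<lambda>x. x mod int p"]) (simp add: algebra_simps)
  finally show ?case .
qed

lemma addhom_inv: assumes "addhom G p H f" "subgroup H G" "g \<in> H"
  shows "f (inv g) = (- f g) mod int p"
proof -
  have ig: "inv g \<in> H" using subgroup.m_inv_closed[OF assms(2,3)] .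
  have gc: "g \<in> carrier G" using subgroup.mem_carrier[OF assms(2,3)] .
  have m: "\<forall>g\<in>H. \<forall>h\<in>H. f (g \<otimes> h) = (f g + f h) mod int p" and rr: "\<forall>g\<in>H. f g \<in> {0..<int p}"
    using assms(1) unfolding addhom_def by blast+
  have "f (g \<otimes> inv g) = (f g + f (inv g)) mod int p" using m assms(3) ig by blast
  hence e0: "0 = (f g + f (inv g)) mod int p" using addhom_one[OF assms(1,2)] gc by simp
  have r: "f (inv g) \<in> {0..<int p}" using rr ig by blast
  have "f (inv g) = f (inv g) mod int p" using r by simp
  also have "\<dots> = ((f g + f (inv g)) - f g) mod int p" by simp
  also have "\<dots> = ((f g + f (inv g)) mod int p - f g) mod int p" by (rule mod_diff_left_eq[symmetric])
  also have "\<dots> = (0 - f g) mod int p" using e0 by simp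
  finally show ?thesis by simp
qed

lemma addhom_ker_maximal:
  assumes pr: "Factorial_Ring.prime p" and f: "addhom G p (carrier G) f" and g0: "g0 \<in> carrier G" "f g0 \<noteq> 0"
  shows "maximal_subgroup {g \<in> carrier G. f g = 0} G"
proof -
  let ?K = "{g \<in> carrier G. f g = 0}"
  have sg: "subgroup ?K G"
  proof (rule subgroupI)
    show "?K \<noteq> {}" using addhom_one[OF f subgroup_self] by auto
    fix a b assume a: "a \<in> ?K" and b: "b \<in> ?K"
    show "inv a \<in> ?K" using a addhom_inv[OF f subgroup_self, of a] by auto
    show "a \<otimes> b \<in> ?K" using a b f unfolding addhom_def by auto
  qed auto
  have P1: "int p > 1" using pr prime_gt_1_nat by auto
  have "\<forall>K. subgroup K G \<and> ?K \<subseteq> K \<longrightarrow> K = ?K \<or> K = carrier G"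
  proof (intro allI impI, elim conjE)
    fix K assume Ksg: "subgroup K G" and KK: "?K \<subseteq> K"
    have Kc: "K \<subseteq> carrier G" using subgroup.subset[OF Ksg] .
    show "K = ?K \<or> K = carrier G"
    proof (cases "K \<subseteq> ?K")
      case True then show ?thesis using KK by auto
    next
      case False
      then obtain h where h: "h \<in> K" "f h \<noteq> 0" using Kc by auto
      have hc: "h \<in> carrier G" using h Kc by auto
      have ha: "0 < f h" "f h < int p" using h hc f unfolding addhom_def by auto
      have nd: "\<not> int p dvd f h" using ha zdvd_imp_le by fastforce
      have pi: "Factorial_Ring.prime (int p)" using pr by simp
      have cop: "coprime (int p) (f h)" using prime_imp_coprime[OF pi nd] .
      obtain u v where uv: "u * f h + v * int p = 1" using bezout_int[of "f h" "int p"] cop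
        by (metis coprime_commute coprime_iff_gcd_eq_1)
      have "carrier G \<subseteq> K"
      proof
        fix g assume gc: "g \<in> carrier G"
        define n where "n = nat ((u * f g) mod int p)"
        have nn: "int n = (u * f g) mod int p" unfolding n_def using P1 by simp
        have hn: "h [^] n \<in> K" using sg_pow[OF Ksg h(1)] .
        have hnc: "h [^] n \<in> carrier G" using hc by simp
        have fhn: "f (h [^] n) = f g"
        proof -
          have "f (h [^] n) = (int n * f h) mod int p" using addhom_pow[OF f subgroup_self hc] by simp
          also have "\<dots> = ((u * f g) * f h) mod int p" using nn by (simp add: mod_mult_left_eq)
          also have "\<dots> = (f g * (u * f h)) mod int p" by (simp add: algebra_simps)
          also have "\<dots> = (f g * (1 - v * int p)) mod int p" using uv by (metis add_diff_cancel_right')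
          also have "\<dots> = (f g + (- f g * v) * int p) mod int p" by (simp add: algebra_simps)
          also have "\<dots> = f g mod int p" by (rule mod_mult_self1)
          also have "\<dots> = f g" using gc f unfolding addhom_def by auto
          finally show ?thesis .
        qed
        have ihc: "inv (h [^] n) \<in> carrier G" using hnc by simp
        have "f (inv (h [^] n) \<otimes> g) = (f (inv (h [^] n)) + f g) mod int p"
          using f gc ihc unfolding addhom_def by blast
        also have "\<dots> = ((- f g) mod int p + f g) mod int p"
          using addhom_inv[OF f subgroup_self hnc] fhn by simp
        also have "\<dots> = 0" by (simp add: mod_add_left_eq)
        finally have "inv (h [^] n) \<otimes> g \<in> K" using KK gc ihc by auto
        hence "h [^] n \<otimes> (inv (h [^] n) \<otimes> g) \<in> K" using subgroup.m_closed[OF Ksg hn] by auto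
        thus "g \<in> K" using hnc gc by (simp add: m_assoc[symmetric])
      qed
      then show ?thesis using Kc by auto
    qed
  qed
  moreover have "?K \<noteq> carrier G" using g0 by auto
  ultimately show ?thesis unfolding maximal_subgroup_def using sg by blast
qed

lemma frattini_addhom:
  assumes pr: "Factorial_Ring.prime p" and f: "addhom G p (carrier G) f" and g: "g \<in> frattini G"
  shows "f g = 0"
proof (cases "\<exists>g0\<in>carrier G. f g0 \<noteq> 0")
  case True
  then obtain g0 where "g0 \<in> carrier G" "f g0 \<noteq> 0" by blast
  from addhom_ker_maximal[OF pr f this] g show ?thesis unfolding frattini_def by blast
next
  case False then show ?thesis using g unfolding frattini_def by blast
qed

lemma frattini_subgroup: "subgroup (frattini G) G"
proof (rule subgroupI)
  show "frattini G \<subseteq> carrier G" unfolding frattini_def by auto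
  have "\<one> \<in> frattini G" unfolding frattini_def maximal_subgroup_def
  proof (intro IntI InterI)
    fix H assume "H \<in> {H. subgroup H G \<and> H \<noteq> carrier G \<and> (\<forall>K. subgroup K G \<and> H \<subseteq> K \<longrightarrow> K = H \<or> K = carrier G)}"
    hence "subgroup H G" by simp
    thus "\<one> \<in> H" by (rule subgroup.one_closed)
  qed simp
  thus "frattini G \<noteq> {}" by auto
  fix a b assume a: "a \<in> frattini G" and b: "b \<in> frattini G"
  show "inv a \<in> frattini G" unfolding frattini_def
  proof (intro IntI InterI)
    show "inv a \<in> carrier G" using a unfolding frattini_def by simp
    fix H assume H: "H \<in> {H. maximal_subgroup H G}"
    hence "subgroup H G" unfolding maximal_subgroup_def by simp
    moreover have "a \<in> H" using a H unfolding frattini_def by simp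
    ultimately show "inv a \<in> H" by (rule subgroup.m_inv_closed)
  qed
  show "a \<otimes> b \<in> frattini G" unfolding frattini_def
  proof (intro IntI InterI)
    show "a \<otimes> b \<in> carrier G" using a b unfolding frattini_def by simp
    fix H assume H: "H \<in> {H. maximal_subgroup H G}"
    hence "subgroup H G" unfolding maximal_subgroup_def by simp
    moreover have "a \<in> H" "b \<in> H" using a b H unfolding frattini_def by simp_all
    ultimately show "a \<otimes> b \<in> H" by (rule subgroup.m_closed)
  qed
qed

end


primrec secG :: "('g,'b) monoid_scheme \<Rightarrow> (nat \<Rightarrow> 'g) \<Rightarrow> nat list \<Rightarrow> (nat \<Rightarrow> int) \<Rightarrow> 'g" where
  "secG G y [] x = \<one>\<^bsub>G\<^esub>"
| "secG G y (i # L) x = y i [^]\<^bsub>G\<^esub> nat (x i) \<otimes>\<^bsub>G\<^esub> secG G y L x"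

definition commG :: "('g,'b) monoid_scheme \<Rightarrow> 'g \<Rightarrow> 'g \<Rightarrow> 'g" where
  "commG G a b = a \<otimes>\<^bsub>G\<^esub> b \<otimes>\<^bsub>G\<^esub> inv\<^bsub>G\<^esub> a \<otimes>\<^bsub>G\<^esub> inv\<^bsub>G\<^esub> b"

locale L37 = group G for G (structure) +
  fixes p d :: nat and y :: "nat \<Rightarrow> 'a" and \<delta> :: "nat \<Rightarrow> 'a \<Rightarrow> int"
  assumes pr: "Factorial_Ring.prime p"
    and fin: "finite (carrier G)"
    and expo: "\<forall>x\<in>carrier G. x [^] p = \<one>"
    and g3: "gamma3 G = {\<one>}"
    and ycar: "y ` {1..d} \<subseteq> carrier G"
    and gen: "generate G (y ` {1..d}) = carrier G"
    and frat: "card (rcosets (frattini G)) = p ^ d"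
    and delta: "\<forall>j\<in>{1..d}. (\<forall>g\<in>carrier G. \<delta> j g \<in> {0..<int p})
                  \<and> (\<forall>g\<in>carrier G. \<forall>h\<in>carrier G. \<delta> j (g \<otimes> h) = (\<delta> j g + \<delta> j h) mod int p)
                  \<and> (\<forall>i\<in>{1..d}. \<delta> j (y i) = (if i = j then 1 else 0))"
begin

abbreviation "D2 \<equiv> gamma2 G"
abbreviation "s \<equiv> secG G y"
abbreviation "comm \<equiv> commG G"

lemma inv_cl: "x \<in> carrier G \<Longrightarrow> z \<in> carrier G \<Longrightarrow> inv x \<otimes> (x \<otimes> z) = z"
  by (simp add: m_assoc[symmetric])
lemma inv_cr: "x \<in> carrier G \<Longrightarrow> z \<in> carrier G \<Longrightarrow> x \<otimes> (inv x \<otimes> z) = z"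
  by (simp add: m_assoc[symmetric])

lemma P1: "int p > 1" using pr prime_gt_1_nat by auto

lemma yc: "i \<in> {1..d} \<Longrightarrow> y i \<in> carrier G" using ycar by auto

lemma dh: "j \<in> {1..d} \<Longrightarrow> addhom G p (carrier G) (\<delta> j)"
  using delta unfolding addhom_def by auto

lemma dy: "j \<in> {1..d} \<Longrightarrow> i \<in> {1..d} \<Longrightarrow> \<delta> j (y i) = (if i = j then 1 else 0)"
  using delta by auto

lemma D2_sg: "subgroup D2 G"
  unfolding gamma2_def by (rule derived_is_subgroup) simp

lemma D2_c: "z \<in> D2 \<Longrightarrow> z \<in> carrier G"
  using subgroup.mem_carrier[OF D2_sg] .

lemma comm_c: "a \<in> carrier G \<Longrightarrow> b \<in> carrier G \<Longrightarrow> comm a b \<in> carrier G"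
  unfolding commG_def by simp

lemma comm_D2: "a \<in> carrier G \<Longrightarrow> b \<in> carrier G \<Longrightarrow> comm a b \<in> D2"
  unfolding commG_def gamma2_def derived_def by (rule generate.incl) blast

lemma central: assumes z: "z \<in> D2" and g: "g \<in> carrier G" shows "z \<otimes> g = g \<otimes> z"
proof -
  have zc: "z \<in> carrier G" using D2_c[OF z] .
  have "z \<otimes> g \<otimes> inv z \<otimes> inv g \<in> gamma3 G" unfolding gamma3_def
    by (rule generate.incl) (use z g in blast)
  hence e: "z \<otimes> g \<otimes> inv z \<otimes> inv g = \<one>" using g3 by simp
  have "z \<otimes> g = z \<otimes> g \<otimes> (inv z \<otimes> inv g \<otimes> (g \<otimes> z))" using zc g by (simp add: m_assoc inv_cl)
  also have "\<dots> = (z \<otimes> g \<otimes> inv z \<otimes> inv g) \<otimes> (g \<otimes> z)" using zc g by (simp add: m_assoc)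
  also have "\<dots> = g \<otimes> z" using e zc g by simp
  finally show ?thesis .
qed

lemma commI: assumes a: "a \<in> carrier G" and h: "h \<in> carrier G" and c: "c \<in> carrier G"
  and e: "a \<otimes> h = c \<otimes> (h \<otimes> a)" shows "comm a h = c"
proof -
  have "comm a h = (a \<otimes> h) \<otimes> (inv a \<otimes> inv h)" unfolding commG_def using a h by (simp add: m_assoc)
  also have "\<dots> = c \<otimes> (h \<otimes> a) \<otimes> (inv a \<otimes> inv h)" using e by simp
  also have "\<dots> = c" using a h c by (simp add: m_assoc inv_cl inv_cr)
  finally show ?thesis .
qed

lemma comm_eq: "a \<in> carrier G \<Longrightarrow> h \<in> carrier G \<Longrightarrow> a \<otimes> h = comm a h \<otimes> (h \<otimes> a)"
  unfolding commG_def by (simp add: m_assoc inv_cl inv_cr)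

lemma comm_mult_l: assumes a: "a \<in> carrier G" and a': "a' \<in> carrier G" and h: "h \<in> carrier G"
  shows "comm (a \<otimes> a') h = comm a h \<otimes> comm a' h"
proof (rule commI)
  let ?c = "comm a h" and ?c' = "comm a' h"
  have cc: "?c \<in> carrier G" "?c' \<in> carrier G" using comm_c a a' h by auto
  have "a \<otimes> a' \<otimes> h = a \<otimes> (?c' \<otimes> (h \<otimes> a'))" using comm_eq[OF a' h] a a' h by (simp add: m_assoc)
  also have "\<dots> = ?c' \<otimes> (a \<otimes> h) \<otimes> a'" using central[OF comm_D2[OF a' h] a] a a' h cc
    by (simp add: m_assoc[symmetric])
  also have "\<dots> = ?c' \<otimes> (?c \<otimes> (h \<otimes> a)) \<otimes> a'" using comm_eq[OF a h] by simp
  also have "\<dots> = (?c \<otimes> ?c') \<otimes> (h \<otimes> (a \<otimes> a'))" using central[OF comm_D2[OF a h] cc(2)] a a' h cc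
    by (simp add: m_assoc)
  finally show "a \<otimes> a' \<otimes> h = ?c \<otimes> ?c' \<otimes> (h \<otimes> (a \<otimes> a'))" .
qed (use a a' h comm_c in auto)

lemma comm_mult_r: assumes a: "a \<in> carrier G" and h: "h \<in> carrier G" and h': "h' \<in> carrier G"
  shows "comm a (h \<otimes> h') = comm a h \<otimes> comm a h'"
proof (rule commI)
  let ?c = "comm a h" and ?c' = "comm a h'"
  have cc: "?c \<in> carrier G" "?c' \<in> carrier G" using comm_c a h h' by auto
  have "a \<otimes> (h \<otimes> h') = (a \<otimes> h) \<otimes> h'" using a h h' by (simp add: m_assoc)
  also have "\<dots> = (?c \<otimes> (h \<otimes> a)) \<otimes> h'" by (simp only: comm_eq[OF a h])
  also have "\<dots> = ?c \<otimes> (h \<otimes> (a \<otimes> h'))" using a h h' cc by (simp add: m_assoc)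
  also have "\<dots> = ?c \<otimes> (h \<otimes> (?c' \<otimes> (h' \<otimes> a)))" using comm_eq[OF a h'] by simp
  also have "\<dots> = ?c \<otimes> (?c' \<otimes> h \<otimes> (h' \<otimes> a))" using central[OF comm_D2[OF a h'] h] a h h' cc
    by (simp add: m_assoc)
  also have "\<dots> = (?c \<otimes> ?c') \<otimes> (h \<otimes> h' \<otimes> a)" using a h h' cc by (simp add: m_assoc)
  finally show "a \<otimes> (h \<otimes> h') = ?c \<otimes> ?c' \<otimes> (h \<otimes> h' \<otimes> a)" .
qed (use a h h' comm_c in auto)

lemma s_c: "set L \<subseteq> {1..d} \<Longrightarrow> s L x \<in> carrier G"
  by (induction L) (auto simp: yc)

lemma s_cong: "\<forall>i\<in>set L. x i = x' i \<Longrightarrow> s L x = s L x'"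
  by (induction L) auto

lemma s_zero: "set L \<subseteq> {1..d} \<Longrightarrow> \<forall>i\<in>set L. x i = 0 \<Longrightarrow> s L x = \<one>"
  by (induction L) (auto simp: yc s_c)

lemma s_single: assumes "distinct L" "set L \<subseteq> {1..d}" "i \<in> set L" "m \<ge> 0"
  shows "s L (\<lambda>j. if j = i then m else 0) = y i [^] nat m"
  using assms
proof (induction L)
  case Nil then show ?case by simp
next
  case (Cons k L)
  show ?case
  proof (cases "k = i")
    case True
    hence "i \<notin> set L" using Cons by auto
    hence "s L (\<lambda>j. if j = i then m else 0) = \<one>" using Cons by (intro s_zero) auto
    then show ?thesis using True Cons yc by simp
  next
    case False
    have "i \<in> {1..d}" using Cons by auto
    then show ?thesis using False Cons yc by simp
  qed
qed

lemma d_pow: assumes j: "j \<in> {1..d}" and g: "g \<in> carrier G"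
  shows "\<delta> j (g [^] (n::nat)) = (int n * \<delta> j g) mod int p"
  using addhom_pow[OF dh[OF j] subgroup_self g] .

lemma d_s: assumes j: "j \<in> {1..d}" and L: "distinct L" "set L \<subseteq> {1..d}"
  and x: "\<forall>i\<in>set L. 0 \<le> x i \<and> x i < int p"
  shows "\<delta> j (s L x) = (if j \<in> set L then x j else 0)"
  using L x
proof (induction L)
  case Nil then show ?case using addhom_one[OF dh[OF j] subgroup_self] by simp
next
  case (Cons i L)
  have i: "i \<in> {1..d}" using Cons by auto
  have sc: "s L x \<in> carrier G" using Cons s_c by auto
  have "\<delta> j (s (i # L) x) = (\<delta> j (y i [^] nat (x i)) + \<delta> j (s L x)) mod int p"
    using dh[OF j] sc yc[OF i] unfolding addhom_def by simp
  also have e1: "\<delta> j (y i [^] nat (x i)) = (int (nat (x i)) * \<delta> j (y i)) mod int p"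
    by (rule d_pow[OF j yc[OF i]])
  have e2: "int (nat (x i)) = x i" using Cons by simp
  have "\<delta> j (y i [^] nat (x i)) = (x i * (if i = j then 1 else 0)) mod int p"
    by (simp only: e1 e2 dy[OF j i])
  finally show ?case using Cons by auto
qed

end


context L37 begin

lemma pow_modp: assumes g: "g \<in> carrier G" shows "g [^] (n::nat) = g [^] (n mod p)"
proof -
  have "g [^] n = g [^] (p * (n div p) + n mod p)" by simp
  also have "\<dots> = g [^] (p * (n div p)) \<otimes> g [^] (n mod p)"
    using g by (simp add: nat_pow_mult)
  also have "\<dots> = (g [^] p) [^] (n div p) \<otimes> g [^] (n mod p)"
    using g by (simp add: nat_pow_pow)
  also have "\<dots> = g [^] (n mod p)" using expo g by simp
  finally show ?thesis .
qed

lemma psi_l: assumes \<phi>: "addhom G p D2 \<phi>" and h: "h \<in> carrier G"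
  shows "addhom G p (carrier G) (\<lambda>a. \<phi> (comm a h))"
  unfolding addhom_def
proof (intro conjI ballI)
  fix a assume a: "a \<in> carrier G"
  show "\<phi> (comm a h) \<in> {0..<int p}" using \<phi> comm_D2[OF a h] unfolding addhom_def by blast
  fix b assume b: "b \<in> carrier G"
  show "\<phi> (comm (a \<otimes> b) h) = (\<phi> (comm a h) + \<phi> (comm b h)) mod int p"
    using comm_mult_l[OF a b h] \<phi> comm_D2[OF a h] comm_D2[OF b h] unfolding addhom_def by simp
qed

lemma psi_r: assumes \<phi>: "addhom G p D2 \<phi>" and a: "a \<in> carrier G"
  shows "addhom G p (carrier G) (\<lambda>h. \<phi> (comm a h))"
  unfolding addhom_def
proof (intro conjI ballI)
  fix h assume h: "h \<in> carrier G"
  show "\<phi> (comm a h) \<in> {0..<int p}" using \<phi> comm_D2[OF a h] unfolding addhom_def by blast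
  fix b assume b: "b \<in> carrier G"
  show "\<phi> (comm a (h \<otimes> b)) = (\<phi> (comm a h) + \<phi> (comm a b)) mod int p"
    using comm_mult_r[OF a h b] \<phi> comm_D2[OF a h] comm_D2[OF a b] unfolding addhom_def by simp
qed

lemma psi_s: assumes \<phi>: "addhom G p D2 \<phi>" and h: "h \<in> carrier G"
  and L: "distinct L" "set L \<subseteq> {1..d}" and x: "\<forall>i\<in>set L. 0 \<le> x i"
  shows "\<phi> (comm (s L x) h) = (\<Sum>j\<in>set L. x j * \<phi> (comm (y j) h)) mod int p"
  using L x
proof (induction L)
  case Nil
  have "comm \<one> h = \<one>" unfolding commG_def using h by simp
  then show ?case using addhom_one[OF \<phi> D2_sg] by simp
next
  case (Cons i L)
  have i: "i \<in> {1..d}" using Cons by auto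
  have sc: "s L x \<in> carrier G" using Cons s_c by auto
  have yic: "y i [^] nat (x i) \<in> carrier G" using yc[OF i] by simp
  have h0: "\<phi> (comm (s (i # L) x) h) = (\<phi> (comm (y i [^] nat (x i)) h) + \<phi> (comm (s L x) h)) mod int p"
    using psi_l[OF \<phi> h] sc yic unfolding addhom_def by simp
  have e1: "\<phi> (comm (y i [^] nat (x i)) h) = (int (nat (x i)) * \<phi> (comm (y i) h)) mod int p"
    using addhom_pow[OF psi_l[OF \<phi> h] subgroup_self yc[OF i]] by simp
  have e2: "int (nat (x i)) = x i" using Cons by simp
  have "\<phi> (comm (s (i # L) x) h) = ((x i * \<phi> (comm (y i) h)) mod int p + (\<Sum>j\<in>set L. x j * \<phi> (comm (y j) h)) mod int p) mod int p"
    using h0 e1 e2 Cons by simp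
  also have "\<dots> = (\<Sum>j\<in>set (i # L). x j * \<phi> (comm (y j) h)) mod int p"
    using Cons by (simp add: mod_add_eq)
  finally show ?case .
qed

lemma E: assumes \<phi>: "addhom G p D2 \<phi>" and x: "\<forall>k\<in>{1..d}. 0 \<le> x k \<and> x k < int p"
  and u: "\<forall>k\<in>{1..d}. 0 \<le> u k \<and> u k < int p"
  shows "i \<ge> 1 \<Longrightarrow> \<exists>c\<in>D2. s [i..<Suc d] x \<otimes> s [i..<Suc d] u = c \<otimes> s [i..<Suc d] (\<lambda>k. (x k + u k) mod int p)
     \<and> \<phi> c = (\<Sum>k\<in>{i..d}. u k * (\<Sum>j\<in>{k<..d}. x j * \<phi> (comm (y j) (y k)))) mod int p"
proof (induction "Suc d - i" arbitrary: i)
  case 0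
  hence "[i..<Suc d] = []" by simp
  moreover have "{i..d} = {}" using 0 by auto
  ultimately show ?case using addhom_one[OF \<phi> D2_sg] subgroup.one_closed[OF D2_sg]
    by (intro bexI[of _ \<one>]) auto
next
  case (Suc n)
  define z where "z = (\<lambda>k. (x k + u k) mod int p)"
  have i: "i \<in> {1..d}" using Suc by auto
  have Lc: "[i..<Suc d] = i # [Suc i..<Suc d]" using i by (simp add: upt_conv_Cons)
  obtain c' where c': "c' \<in> D2" "s [Suc i..<Suc d] x \<otimes> s [Suc i..<Suc d] u = c' \<otimes> s [Suc i..<Suc d] z"
    "\<phi> c' = (\<Sum>k\<in>{Suc i..d}. u k * (\<Sum>j\<in>{k<..d}. x j * \<phi> (comm (y j) (y k)))) mod int p"
  proof -
    have "n = Suc d - Suc i" using Suc.hyps(2) by arith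
    from Suc.hyps(1)[OF this] show ?thesis using that unfolding z_def by auto
  qed
  let ?Y = "y i" and ?a = "nat (x i)" and ?b = "nat (u i)"
  let ?S = "s [Suc i..<Suc d] x" and ?T = "s [Suc i..<Suc d] u" and ?Z = "s [Suc i..<Suc d] z"
  have Yc: "?Y \<in> carrier G" using yc[OF i] .
  have SL: "set [Suc i..<Suc d] \<subseteq> {1..d}" by auto
  have Sc: "?S \<in> carrier G" "?T \<in> carrier G" "?Z \<in> carrier G" using s_c[OF SL] by auto
  let ?k = "comm ?S (?Y [^] ?b)"
  have kD: "?k \<in> D2" using comm_D2 Sc Yc by simp
  have kc: "?k \<in> carrier G" using D2_c[OF kD] .
  have c'c: "c' \<in> carrier G" using D2_c[OF c'(1)] .
  have ab: "?Y [^] ?a \<otimes> ?Y [^] ?b = ?Y [^] nat (z i)"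
  proof -
    have "?Y [^] ?a \<otimes> ?Y [^] ?b = ?Y [^] ((?a + ?b) mod p)"
      using Yc pow_modp[OF Yc, of "?a + ?b"] by (simp add: nat_pow_mult)
    moreover have "nat (z i) = (?a + ?b) mod p" unfolding z_def using x u i
      by (simp add: nat_mod_distrib nat_add_distrib)
    ultimately show ?thesis by simp
  qed
  have Ybc: "?Y [^] ?b \<in> carrier G" and Yac: "?Y [^] ?a \<in> carrier G" and Ync: "?Y [^] nat (z i) \<in> carrier G"
    using Yc by auto
  have "s [i..<Suc d] x \<otimes> s [i..<Suc d] u = (?Y [^] ?a \<otimes> ?S) \<otimes> (?Y [^] ?b \<otimes> ?T)" using Lc by simp
  also have "\<dots> = ?Y [^] ?a \<otimes> (?S \<otimes> ?Y [^] ?b) \<otimes> ?T" using Yc Sc by (simp add: m_assoc)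
  also have "\<dots> = ?Y [^] ?a \<otimes> (?k \<otimes> (?Y [^] ?b \<otimes> ?S)) \<otimes> ?T" by (simp only: comm_eq[OF Sc(1) Ybc])
  also have "\<dots> = (?Y [^] ?a \<otimes> ?k) \<otimes> (?Y [^] ?b \<otimes> (?S \<otimes> ?T))" using Yc Sc kc by (simp add: m_assoc)
  also have "\<dots> = (?k \<otimes> ?Y [^] ?a) \<otimes> (?Y [^] ?b \<otimes> (?S \<otimes> ?T))" by (simp only: central[OF kD Yac])
  also have "\<dots> = ?k \<otimes> (?Y [^] ?a \<otimes> ?Y [^] ?b) \<otimes> (c' \<otimes> ?Z)" unfolding c'(2) using Yc Sc kc c'c by (simp add: m_assoc)
  also have "\<dots> = ?k \<otimes> ((?Y [^] nat (z i) \<otimes> c') \<otimes> ?Z)" unfolding ab using Yc Sc kc c'c by (simp add: m_assoc)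
  also have "\<dots> = ?k \<otimes> ((c' \<otimes> ?Y [^] nat (z i)) \<otimes> ?Z)" by (simp only: central[OF c'(1) Ync])
  also have "\<dots> = (?k \<otimes> c') \<otimes> s [i..<Suc d] z" using Lc Yc Sc kc c'c by (simp add: m_assoc)
  finally have eq: "s [i..<Suc d] x \<otimes> s [i..<Suc d] u = (?k \<otimes> c') \<otimes> s [i..<Suc d] z" .
  have kcD: "?k \<otimes> c' \<in> D2" using subgroup.m_closed[OF D2_sg kD c'(1)] .
  define W where "W = (\<Sum>j\<in>{i<..d}. x j * \<phi> (comm (y j) (y i)))"
  have pk: "\<phi> ?k = (u i * (W mod int p)) mod int p"
  proof -
    have e1: "\<phi> ?k = (int ?b * \<phi> (comm ?S ?Y)) mod int p"
      using addhom_pow[OF psi_r[OF \<phi> Sc(1)] subgroup_self Yc, of ?b] by (simp only:)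
    have e2: "int ?b = u i" using u i by simp
    have e3: "\<phi> (comm ?S ?Y) = W mod int p"
    proof -
      have st: "set [Suc i..<Suc d] = {i<..d}" by auto
      have xn: "\<forall>j\<in>set [Suc i..<Suc d]. 0 \<le> x j" using x by auto
      have "\<phi> (comm ?S ?Y) = (\<Sum>j\<in>set [Suc i..<Suc d]. x j * \<phi> (comm (y j) ?Y)) mod int p"
        by (rule psi_s[OF \<phi> Yc _ SL xn]) simp
      then show ?thesis unfolding W_def st .
    qed
    show ?thesis by (simp only: e1 e2 e3)
  qed
  have "\<phi> (?k \<otimes> c') = (\<phi> ?k + \<phi> c') mod int p" using \<phi> kD c'(1) unfolding addhom_def by blast
  also have "\<dots> = (u i * W + (\<Sum>k\<in>{Suc i..d}. u k * (\<Sum>j\<in>{k<..d}. x j * \<phi> (comm (y j) (y k))))) mod int p"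
    using pk c'(3) by (simp add: mod_add_eq mod_mult_right_eq)
  also have "\<dots> = (\<Sum>k\<in>{i..d}. u k * (\<Sum>j\<in>{k<..d}. x j * \<phi> (comm (y j) (y k)))) mod int p"
    unfolding W_def using i by (simp add: sum.atLeast_Suc_atMost)
  finally show ?case using eq kcD unfolding z_def by blast
qed

end


context L37 begin

abbreviation "Ld \<equiv> [1..<Suc d]"
definition "XX = {x :: nat \<Rightarrow> int. (\<forall>i\<in>{1..d}. 0 \<le> x i \<and> x i < int p) \<and> (\<forall>i. i \<notin> {1..d} \<longrightarrow> x i = 0)}"
definition "NN = {g \<in> carrier G. \<forall>j\<in>{1..d}. \<delta> j g = 0}"

lemma Ld_set: "set Ld = {1..d}" by auto

lemma sLd_c: "s Ld x \<in> carrier G" by (rule s_c) auto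

lemma p0: "p > 0" using P1 by simp

lemma XX_mult: assumes x: "x \<in> XX" and u: "u \<in> XX"
  shows "\<exists>c\<in>D2. s Ld x \<otimes> s Ld u = c \<otimes> s Ld (\<lambda>k. if k \<in> {1..d} then (x k + u k) mod int p else 0)"
proof -
  have z: "addhom G p D2 (\<lambda>_. 0)" unfolding addhom_def using P1 by auto
  obtain c where c: "c \<in> D2" "s Ld x \<otimes> s Ld u = c \<otimes> s Ld (\<lambda>k. (x k + u k) mod int p)"
    using E[OF z, of x u 1] x u unfolding XX_def by auto
  have "s Ld (\<lambda>k. (x k + u k) mod int p) = s Ld (\<lambda>k. if k \<in> {1..d} then (x k + u k) mod int p else 0)"
    by (rule s_cong) auto
  then show ?thesis using c by auto
qed

lemma XX_add: "x \<in> XX \<Longrightarrow> u \<in> XX \<Longrightarrow> (\<lambda>k. if k \<in> {1..d} then (x k + u k) mod int p else 0) \<in> XX"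
  unfolding XX_def using p0 by (auto intro!: pos_mod_bound)

lemma XX_e: "i \<in> {1..d} \<Longrightarrow> 0 \<le> m \<Longrightarrow> m < int p \<Longrightarrow> (\<lambda>j. if j = i then m else 0) \<in> XX"
  unfolding XX_def by auto

lemma s_e: "i \<in> {1..d} \<Longrightarrow> 0 \<le> m \<Longrightarrow> s Ld (\<lambda>j. if j = i then m else 0) = y i [^] nat m"
  by (rule s_single) auto

lemma decomp: assumes g: "g \<in> carrier G" shows "\<exists>c\<in>D2. \<exists>x\<in>XX. g = c \<otimes> s Ld x"
proof -
  have oD: "\<one> \<in> D2" using subgroup.one_closed[OF D2_sg] .
  have g': "g \<in> generate G (y ` {1..d})" using g gen by simp
  then show ?thesis
  proof (induction rule: generate.induct)
    case one
    have "(\<lambda>_. 0) \<in> XX" unfolding XX_def using p0 by auto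
    moreover have "s Ld (\<lambda>_. 0) = \<one>" by (rule s_zero) auto
    ultimately show ?case using oD by force
  next
    case (incl h)
    then obtain i where i: "i \<in> {1..d}" "h = y i" by auto
    have "s Ld (\<lambda>j. if j = i then 1 else 0) = y i" using s_e[OF i(1), of 1] yc[OF i(1)] by simp
    moreover have "(\<lambda>j. if j = i then 1 else 0) \<in> XX" using XX_e[OF i(1), of 1] P1 by simp
    ultimately show ?case using oD i yc[OF i(1)] by force
  next
    case (inv h)
    then obtain i where i: "i \<in> {1..d}" "h = y i" by auto
    have Y: "y i \<in> carrier G" using yc[OF i(1)] .
    have "y i [^] (p - 1) \<otimes> y i = y i [^] p" using Y P1
      by (metis Suc_diff_1 nat_pow_Suc of_nat_0_less_iff order.strict_trans zero_less_one)
    hence "y i [^] (p - 1) \<otimes> y i = \<one>" using expo Y by simp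
    hence iv: "inv (y i) = y i [^] (p - 1)" using Y by (intro inv_equality) auto
    have "s Ld (\<lambda>j. if j = i then int (p - 1) else 0) = y i [^] (p - 1)" using s_e[OF i(1), of "int (p - 1)"] by simp
    moreover have "(\<lambda>j. if j = i then int (p - 1) else 0) \<in> XX" using XX_e[OF i(1), of "int (p - 1)"] P1 by simp
    ultimately show ?case using oD i iv Y by force
  next
    case (eng g1 g2)
    obtain c1 x1 where 1: "c1 \<in> D2" "x1 \<in> XX" "g1 = c1 \<otimes> s Ld x1" using eng.IH(1) by blast
    obtain c2 x2 where 2: "c2 \<in> D2" "x2 \<in> XX" "g2 = c2 \<otimes> s Ld x2" using eng.IH(2) by blast
    obtain c where c: "c \<in> D2" "s Ld x1 \<otimes> s Ld x2 = c \<otimes> s Ld (\<lambda>k. if k \<in> {1..d} then (x1 k + x2 k) mod int p else 0)"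
      using XX_mult[OF 1(2) 2(2)] by auto
    let ?z = "\<lambda>k. if k \<in> {1..d} then (x1 k + x2 k) mod int p else 0"
    have cc: "c1 \<in> carrier G" "c2 \<in> carrier G" "c \<in> carrier G" using D2_c 1 2 c by auto
    have "g1 \<otimes> g2 = c1 \<otimes> (s Ld x1 \<otimes> c2) \<otimes> s Ld x2" using 1 2 cc sLd_c by (simp add: m_assoc)
    also have "\<dots> = c1 \<otimes> (c2 \<otimes> s Ld x1) \<otimes> s Ld x2" by (simp only: central[OF 2(1) sLd_c])
    also have "\<dots> = (c1 \<otimes> c2) \<otimes> (s Ld x1 \<otimes> s Ld x2)" using cc sLd_c by (simp add: m_assoc)
    also have "\<dots> = (c1 \<otimes> c2 \<otimes> c) \<otimes> s Ld ?z" using c(2) cc sLd_c by (simp add: m_assoc)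
    finally have "g1 \<otimes> g2 = (c1 \<otimes> c2 \<otimes> c) \<otimes> s Ld ?z" .
    moreover have "c1 \<otimes> c2 \<otimes> c \<in> D2" using subgroup.m_closed[OF D2_sg] 1 2 c by blast
    moreover have "?z \<in> XX" using XX_add[OF 1(2) 2(2)] .
    ultimately show ?case by blast
  qed
qed

end


context L37 begin

lemma d_sLd: assumes j: "j \<in> {1..d}" and x: "x \<in> XX" shows "\<delta> j (s Ld x) = x j"
proof -
  have "\<delta> j (s Ld x) = (if j \<in> set Ld then x j else 0)" by (rule d_s[OF j]) (use x in \<open>auto simp: XX_def\<close>)
  then show ?thesis using j by (simp only: set_upt) auto
qed

lemma NN_sg: "subgroup NN G"
proof (rule subgroupI)
  show "NN \<subseteq> carrier G" unfolding NN_def by auto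
  show "NN \<noteq> {}" unfolding NN_def using addhom_one[OF dh subgroup_self] by auto
  fix a b assume a: "a \<in> NN" and b: "b \<in> NN"
  show "inv a \<in> NN" unfolding NN_def using a addhom_inv[OF dh subgroup_self] unfolding NN_def by auto
  show "a \<otimes> b \<in> NN" unfolding NN_def using a b dh unfolding NN_def addhom_def by auto
qed

lemma d_comm: assumes j: "j \<in> {1..d}" and a: "a \<in> carrier G" and b: "b \<in> carrier G"
  shows "\<delta> j (a \<otimes> b \<otimes> inv a \<otimes> inv b) = 0"
proof -
  have m: "\<forall>g\<in>carrier G. \<forall>h\<in>carrier G. \<delta> j (g \<otimes> h) = (\<delta> j g + \<delta> j h) mod int p"
    using dh[OF j] unfolding addhom_def by blast
  have ia: "\<delta> j (inv a) = (- \<delta> j a) mod int p" using addhom_inv[OF dh[OF j] subgroup_self a] .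
  have ib: "\<delta> j (inv b) = (- \<delta> j b) mod int p" using addhom_inv[OF dh[OF j] subgroup_self b] .
  have "\<delta> j (a \<otimes> b \<otimes> inv a \<otimes> inv b) = ((((\<delta> j a + \<delta> j b) mod int p + (- \<delta> j a) mod int p) mod int p) + (- \<delta> j b) mod int p) mod int p"
    using m a b ia ib by simp
  also have "\<dots> = 0" by (simp add: mod_add_left_eq mod_add_right_eq mod_diff_left_eq mod_diff_right_eq)
  finally show ?thesis .
qed

lemma D2_NN: "D2 \<subseteq> NN"
  unfolding gamma2_def derived_def
proof (rule generate_subgroup_incl[OF _ NN_sg])
  show "derived_set G (carrier G) \<subseteq> NN" unfolding NN_def using d_comm by auto
qed

lemma NN_D2: "NN \<subseteq> D2"
proof
  fix n assume n: "n \<in> NN"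
  hence nc: "n \<in> carrier G" unfolding NN_def by auto
  obtain c x where c: "c \<in> D2" "x \<in> XX" "n = c \<otimes> s Ld x" using decomp[OF nc] by blast
  have cc: "c \<in> carrier G" using D2_c[OF c(1)] .
  have "\<forall>i\<in>{1..d}. x i = 0"
  proof
    fix j assume j: "j \<in> {1..d}"
    have "\<delta> j n = (\<delta> j c + \<delta> j (s Ld x)) mod int p" using c(3) dh[OF j] cc sLd_c unfolding addhom_def by simp
    also have "\<delta> j c = 0" using D2_NN c(1) j unfolding NN_def by auto
    also have "\<delta> j (s Ld x) = x j" using d_sLd[OF j c(2)] .
    finally have "\<delta> j n = x j mod int p" by simp
    moreover have "x j mod int p = x j" using c(2) j unfolding XX_def by auto
    moreover have "\<delta> j n = 0" using n j unfolding NN_def by auto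
    ultimately show "x j = 0" by simp
  qed
  hence "s Ld x = \<one>" by (intro s_zero) auto
  thus "n \<in> D2" using c cc by simp
qed

lemma Phi_NN: "frattini G \<subseteq> NN"
proof
  fix g assume g: "g \<in> frattini G"
  have "g \<in> carrier G" using g unfolding frattini_def by auto
  moreover have "\<forall>j\<in>{1..d}. \<delta> j g = 0" using frattini_addhom[OF pr dh g] by auto
  ultimately show "g \<in> NN" unfolding NN_def by auto
qed

lemma card_XX: "card XX = p ^ d"
proof -
  let ?P = "PiE {1..d} (\<lambda>_. {0..<int p})"
  let ?F = "\<lambda>f i. if i \<in> {1..d} then f i else (0::int)"
  have "XX = ?F ` ?P"
  proof
    show "?F ` ?P \<subseteq> XX" unfolding XX_def by (auto simp: PiE_def)
    show "XX \<subseteq> ?F ` ?P"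
    proof
      fix x assume x: "x \<in> XX"
      have "restrict x {1..d} \<in> ?P" using x unfolding XX_def by auto
      moreover have "x = ?F (restrict x {1..d})" using x unfolding XX_def by auto
      ultimately show "x \<in> ?F ` ?P" by blast
    qed
  qed
  moreover have "inj_on ?F ?P"
  proof (rule inj_onI)
    fix f g assume f: "f \<in> ?P" and g: "g \<in> ?P" and e: "?F f = ?F g"
    show "f = g"
    proof
      fix i show "f i = g i"
        using f g fun_cong[OF e, of i] by (cases "i \<in> {1..d}") (auto simp: PiE_def extensional_def)
    qed
  qed
  ultimately have "card XX = card ?P" by (simp add: card_image)
  also have "\<dots> = p ^ d" by (simp add: card_PiE)
  finally show ?thesis .
qed

lemma Phi_eq: "frattini G = NN"
proof -
  have fr: "finite (rcosets NN)"
  proof -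
    have "rcosets NN = (\<lambda>a. NN #> a) ` carrier G" unfolding RCOSETS_def by auto
    thus ?thesis using fin by simp
  qed
  have inj: "inj_on (\<lambda>x. NN #> s Ld x) XX"
  proof (rule inj_onI)
    fix x x' assume x: "x \<in> XX" and x': "x' \<in> XX" and e: "NN #> s Ld x = NN #> s Ld x'"
    have "s Ld x \<in> NN #> s Ld x" unfolding r_coset_def using subgroup.one_closed[OF NN_sg] sLd_c
      by (auto intro!: bexI[of _ \<one>])
    then obtain n where n: "n \<in> NN" "s Ld x = n \<otimes> s Ld x'" using e unfolding r_coset_def by auto
    have nc: "n \<in> carrier G" using n unfolding NN_def by auto
    show "x = x'"
    proof
      fix j show "x j = x' j"
      proof (cases "j \<in> {1..d}")
        case j: True
        have "x j = \<delta> j (s Ld x)" using d_sLd[OF j x] by simp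
        also have "\<dots> = (\<delta> j n + \<delta> j (s Ld x')) mod int p" using n dh[OF j] nc sLd_c unfolding addhom_def by simp
        also have "\<delta> j n = 0" using n j unfolding NN_def by auto
        also have "\<delta> j (s Ld x') = x' j" using d_sLd[OF j x'] .
        finally show ?thesis using x' j unfolding XX_def by auto
      next
        case False then show ?thesis using x x' unfolding XX_def by auto
      qed
    qed
  qed
  have "(\<lambda>x. NN #> s Ld x) ` XX \<subseteq> rcosets NN" unfolding RCOSETS_def using sLd_c by blast
  hence "card XX \<le> card (rcosets NN)" using card_inj_on_le[OF inj _ fr] by blast
  hence le: "p ^ d \<le> card (rcosets NN)" using card_XX by simp
  have l1: "card (rcosets (frattini G)) * card (frattini G) = order G" by (rule lagrange[OF frattini_subgroup])
  have l2: "card (rcosets NN) * card NN = order G" by (rule lagrange[OF NN_sg])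
  have "p ^ d * card NN \<le> p ^ d * card (frattini G)" using l1 l2 le frat
    by (metis mult_le_mono1)
  hence "card NN \<le> card (frattini G)" using p0 by simp
  moreover have fN: "finite NN" using fin unfolding NN_def by auto
  moreover have "card (frattini G) \<le> card NN" using card_mono[OF fN Phi_NN] .
  ultimately show ?thesis using card_subset_eq[OF fN Phi_NN] by simp
qed

lemma Phi_D2: "frattini G = D2" using Phi_eq NN_D2 D2_NN by auto

end


definition KK :: "nat \<Rightarrow> (nat \<Rightarrow> nat \<Rightarrow> int) \<Rightarrow> (nat \<Rightarrow> int) \<Rightarrow> nat \<Rightarrow> int" where
  "KK d w x i = (\<Sum>j\<in>{i<..d}. x j * w j i)"

lemma Kmod: "(KK d w (\<lambda>j. (a j + b j) mod (P::int)) i) mod P = (KK d w a i + KK d w b i) mod P"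
proof -
  have "(KK d w (\<lambda>j. (a j + b j) mod P) i) mod P = (\<Sum>j\<in>{i<..d}. ((a j + b j) mod P * w j i) mod P) mod P"
    unfolding KK_def by (simp add: mod_sum_eq)
  also have "\<dots> = (\<Sum>j\<in>{i<..d}. ((a j + b j) * w j i) mod P) mod P" by (simp add: mod_mult_left_eq)
  also have "\<dots> = (\<Sum>j\<in>{i<..d}. (a j + b j) * w j i) mod P" by (simp add: mod_sum_eq)
  also have "\<dots> = (KK d w a i + KK d w b i) mod P" unfolding KK_def
    by (simp add: sum.distrib distrib_right)
  finally show ?thesis .
qed

lemma Smod: "(\<Sum>i\<in>A. ((- f i) mod (P::int)) * e i) mod P = (- (\<Sum>i\<in>A. e i * f i)) mod P"
proof -
  have "(\<Sum>i\<in>A. ((- f i) mod P) * e i) mod P = (\<Sum>i\<in>A. (((- f i) mod P) * e i) mod P) mod P"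
    by (simp add: mod_sum_eq)
  also have "\<dots> = (\<Sum>i\<in>A. ((- f i) * e i) mod P) mod P" by (simp add: mod_mult_left_eq)
  also have "\<dots> = (\<Sum>i\<in>A. (- f i) * e i) mod P" by (simp add: mod_sum_eq)
  also have "\<dots> = (- (\<Sum>i\<in>A. e i * f i)) mod P" by (simp add: sum_negf[symmetric] algebra_simps)
  finally show ?thesis .
qed

context L37 begin

lemma part1: assumes t: "is_derivation G (carrier G) (A_carrier p d) (A_add p d) (A_act p d \<delta>) \<tau>"
  shows "is_derivation G (frattini G) (S_carrier p d) (A_add p d) (\<lambda>u g. u) \<tau>"
proof -
  have tA: "\<And>g. g \<in> carrier G \<Longrightarrow> \<tau> g \<in> A_carrier p d" using t unfolding is_derivation_def by blast
  have tm: "\<And>g h. g \<in> carrier G \<Longrightarrow> h \<in> carrier G \<Longrightarrow> \<tau> (g \<otimes> h) = A_add p d (A_act p d \<delta> (\<tau> g) h) (\<tau> h)"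
    using t unfolding is_derivation_def by blast
  have Fc: "\<And>g. g \<in> frattini G \<Longrightarrow> g \<in> carrier G" unfolding frattini_def by auto
  have sz: "\<And>g i. g \<in> frattini G \<Longrightarrow> snd (\<tau> g) i = 0"
  proof -
    fix g i assume g: "g \<in> frattini G"
    show "snd (\<tau> g) i = 0"
    proof (cases "i \<in> {1..d}")
      case True
      have "addhom G p (carrier G) (\<lambda>g. snd (\<tau> g) i)" unfolding addhom_def
      proof (intro conjI ballI)
        fix a assume a: "a \<in> carrier G"
        show "snd (\<tau> a) i \<in> {0..<int p}" using tA[OF a] True unfolding A_carrier_def by auto
        fix b assume b: "b \<in> carrier G"
        show "snd (\<tau> (a \<otimes> b)) i = (snd (\<tau> a) i + snd (\<tau> b) i) mod int p"
          using tm[OF a b] True unfolding A_add_def A_act_def by simp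
      qed
      from frattini_addhom[OF pr this g] show ?thesis .
    next
      case False then show ?thesis using tA[OF Fc[OF g]] unfolding A_carrier_def by auto
    qed
  qed
  have tS: "\<And>g. g \<in> frattini G \<Longrightarrow> \<tau> g \<in> S_carrier p d"
  proof -
    fix g assume g: "g \<in> frattini G"
    have "fst (\<tau> g) \<in> {0..<int p}" using tA[OF Fc[OF g]] unfolding A_carrier_def by auto
    thus "\<tau> g \<in> S_carrier p d" using sz[OF g] unfolding S_carrier_def by (cases "\<tau> g") auto
  qed
  have act: "\<And>g h. g \<in> frattini G \<Longrightarrow> A_act p d \<delta> (\<tau> g) h = \<tau> g"
  proof -
    fix g h assume g: "g \<in> frattini G"
    have "fst (\<tau> g) \<in> {0..<int p}" using tA[OF Fc[OF g]] unfolding A_carrier_def by auto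
    thus "A_act p d \<delta> (\<tau> g) h = \<tau> g" using sz[OF g] unfolding A_act_def by (cases "\<tau> g") auto
  qed
  show ?thesis unfolding is_derivation_def
    using tS tm act Fc frattini_subgroup by (auto intro: subgroup.m_closed)
qed

end


context L37 begin

declare upt_Suc [simp del]

lemma gd: assumes g: "g \<in> carrier G" shows "\<exists>c\<in>D2. g = c \<otimes> s Ld (\<lambda>j. \<delta> j g)"
proof -
  obtain c x where c: "c \<in> D2" "x \<in> XX" "g = c \<otimes> s Ld x" using decomp[OF g] by blast
  have cc: "c \<in> carrier G" using D2_c[OF c(1)] .
  have "\<forall>j\<in>set Ld. x j = \<delta> j g"
  proof
    fix j assume "j \<in> set Ld" hence j: "j \<in> {1..d}" by auto
    have "\<delta> j g = (\<delta> j c + \<delta> j (s Ld x)) mod int p" using c(3) dh[OF j] cc sLd_c unfolding addhom_def by simp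
    also have "\<delta> j c = 0" using D2_NN c(1) j unfolding NN_def by auto
    also have "\<delta> j (s Ld x) = x j" using d_sLd[OF j c(2)] .
    finally show "x j = \<delta> j g" using c(2) j unfolding XX_def by auto
  qed
  hence "s Ld x = s Ld (\<lambda>j. \<delta> j g)" by (rule s_cong)
  thus ?thesis using c by auto
qed

lemma part2: assumes sg: "is_derivation G (frattini G) (S_carrier p d) (A_add p d) (\<lambda>u g. u) \<sigma>"
  shows "\<exists>\<tau>. is_derivation G (carrier G) (A_carrier p d) (A_add p d) (A_act p d \<delta>) \<tau>
                       \<and> (\<forall>g\<in>frattini G. \<tau> g = \<sigma> g)"
proof -
  have sS: "\<And>g. g \<in> D2 \<Longrightarrow> \<sigma> g \<in> S_carrier p d" using sg Phi_D2 unfolding is_derivation_def by blast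
  have sm: "\<And>g h. g \<in> D2 \<Longrightarrow> h \<in> D2 \<Longrightarrow> \<sigma> (g \<otimes> h) = A_add p d (\<sigma> g) (\<sigma> h)"
    using sg Phi_D2 unfolding is_derivation_def by blast
  define \<phi> where "\<phi> = (\<lambda>c. fst (\<sigma> c))"
  have \<phi>: "addhom G p D2 \<phi>" unfolding addhom_def \<phi>_def
  proof (intro conjI ballI)
    fix a assume a: "a \<in> D2"
    show "fst (\<sigma> a) \<in> {0..<int p}" using sS[OF a] unfolding S_carrier_def by auto
    fix b assume b: "b \<in> D2"
    show "fst (\<sigma> (a \<otimes> b)) = (fst (\<sigma> a) + fst (\<sigma> b)) mod int p" using sm[OF a b] unfolding A_add_def by simp
  qed
  have \<phi>r: "\<And>c. c \<in> D2 \<Longrightarrow> \<phi> c \<in> {0..<int p}" using \<phi> unfolding addhom_def by blast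
  have \<phi>m: "\<And>a b. a \<in> D2 \<Longrightarrow> b \<in> D2 \<Longrightarrow> \<phi> (a \<otimes> b) = (\<phi> a + \<phi> b) mod int p" using \<phi> unfolding addhom_def by blast
  define w where "w = (\<lambda>j k. \<phi> (comm (y j) (y k)))"
  define dv where "dv = (\<lambda>g j. \<delta> j g)"
  define A where "A = (\<lambda>g. g \<otimes> inv (s Ld (dv g)))"
  define ell where "ell = (\<lambda>g. \<phi> (A g))"
  define \<tau> where "\<tau> = (\<lambda>g. (ell g, \<lambda>i. if i \<in> {1..d} then (- KK d w (dv g) i) mod int p else 0))"
  have AD: "\<And>g. g \<in> carrier G \<Longrightarrow> A g \<in> D2 \<and> g = A g \<otimes> s Ld (dv g)"
  proof -
    fix g assume g: "g \<in> carrier G"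
    obtain c where c: "c \<in> D2" "g = c \<otimes> s Ld (dv g)" using gd[OF g] unfolding dv_def by blast
    have "A g = (c \<otimes> s Ld (dv g)) \<otimes> inv (s Ld (dv g))" unfolding A_def
      using arg_cong[OF c(2), of "\<lambda>t. t \<otimes> inv (s Ld (dv g))"] by (simp only:)
    also have "\<dots> = c" using c(1) D2_c sLd_c by (simp add: m_assoc)
    finally have "A g = c" .
    thus "A g \<in> D2 \<and> g = A g \<otimes> s Ld (dv g)" using c by simp
  qed
  have dvr: "\<And>g j. g \<in> carrier G \<Longrightarrow> j \<in> {1..d} \<Longrightarrow> 0 \<le> dv g j \<and> dv g j < int p"
    unfolding dv_def using dh unfolding addhom_def by auto
  have der: "is_derivation G (carrier G) (A_carrier p d) (A_add p d) (A_act p d \<delta>) \<tau>"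
    unfolding is_derivation_def
  proof (intro conjI ballI)
    fix g assume g: "g \<in> carrier G"
    show "\<tau> g \<in> A_carrier p d" unfolding \<tau>_def A_carrier_def ell_def using \<phi>r AD[OF g] P1 by auto
    fix h assume h: "h \<in> carrier G"
    have gh: "g \<otimes> h \<in> carrier G" using g h by simp
    have dgh: "\<And>j. j \<in> {1..d} \<Longrightarrow> dv (g \<otimes> h) j = (dv g j + dv h j) mod int p"
      unfolding dv_def using dh g h unfolding addhom_def by auto
    have snd_eq: "snd (\<tau> (g \<otimes> h)) = snd (A_add p d (A_act p d \<delta> (\<tau> g) h) (\<tau> h))"
    proof
      fix i
      show "snd (\<tau> (g \<otimes> h)) i = snd (A_add p d (A_act p d \<delta> (\<tau> g) h) (\<tau> h)) i"
      proof (cases "i \<in> {1..d}")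
        case i: True
        have "KK d w (dv (g \<otimes> h)) i = KK d w (\<lambda>j. (dv g j + dv h j) mod int p) i"
          unfolding KK_def using dgh i by (intro sum.cong) auto
        hence "KK d w (dv (g \<otimes> h)) i mod int p = (KK d w (dv g) i + KK d w (dv h) i) mod int p"
          using Kmod by simp
        hence "(- KK d w (dv (g \<otimes> h)) i) mod int p = ((- KK d w (dv g) i) mod int p + (- KK d w (dv h) i) mod int p) mod int p"
          by (metis (no_types, lifting) add.inverse_distrib_swap add.commute mod_add_eq mod_minus_eq)
        then show ?thesis using i unfolding \<tau>_def A_add_def A_act_def by simp
      next
        case False then show ?thesis unfolding \<tau>_def A_add_def A_act_def by auto
      qed
    qed
    obtain c where c: "c \<in> D2" "s Ld (dv g) \<otimes> s Ld (dv h) = c \<otimes> s Ld (\<lambda>k. (dv g k + dv h k) mod int p)"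
      "\<phi> c = (\<Sum>k\<in>{1..d}. dv h k * (\<Sum>j\<in>{k<..d}. dv g j * \<phi> (comm (y j) (y k)))) mod int p"
      using E[OF \<phi>, of "dv g" "dv h" 1] dvr[OF g] dvr[OF h] by auto
    define F0 where "F0 = (\<Sum>k\<in>{1..d}. dv h k * KK d w (dv g) k)"
    have cF: "\<phi> c = F0 mod int p" using c(3) unfolding F0_def KK_def w_def .
    have sgh: "s Ld (\<lambda>k. (dv g k + dv h k) mod int p) = s Ld (dv (g \<otimes> h))"
      by (rule s_cong) (use dgh in auto)
    have Ag: "A g \<in> D2" "g = A g \<otimes> s Ld (dv g)" using AD[OF g] by auto
    have Ah: "A h \<in> D2" "h = A h \<otimes> s Ld (dv h)" using AD[OF h] by auto
    have cc: "c \<in> carrier G" "A g \<in> carrier G" "A h \<in> carrier G" using D2_c c(1) Ag(1) Ah(1) by auto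
    have "g \<otimes> h = A g \<otimes> (s Ld (dv g) \<otimes> A h) \<otimes> s Ld (dv h)"
      using Ag(2) Ah(2) cc sLd_c by (metis m_assoc m_closed)
    also have "\<dots> = A g \<otimes> (A h \<otimes> s Ld (dv g)) \<otimes> s Ld (dv h)" by (simp only: central[OF Ah(1) sLd_c])
    also have "\<dots> = (A g \<otimes> A h) \<otimes> (s Ld (dv g) \<otimes> s Ld (dv h))" using cc sLd_c by (simp add: m_assoc)
    also have "\<dots> = (A g \<otimes> A h \<otimes> c) \<otimes> s Ld (dv (g \<otimes> h))" unfolding c(2) sgh using cc sLd_c by (simp add: m_assoc)
    finally have ghe: "g \<otimes> h = (A g \<otimes> A h \<otimes> c) \<otimes> s Ld (dv (g \<otimes> h))" .
    have "A (g \<otimes> h) = (g \<otimes> h) \<otimes> inv (s Ld (dv (g \<otimes> h)))" by (simp only: A_def)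
    also have "\<dots> = ((A g \<otimes> A h \<otimes> c) \<otimes> s Ld (dv (g \<otimes> h))) \<otimes> inv (s Ld (dv (g \<otimes> h)))"
      using arg_cong[OF ghe, of "\<lambda>t. t \<otimes> inv (s Ld (dv (g \<otimes> h)))"] by (simp only:)
    also have "\<dots> = A g \<otimes> A h \<otimes> c" using cc sLd_c by (simp add: m_assoc)
    finally have "A (g \<otimes> h) = A g \<otimes> A h \<otimes> c" .
    hence "ell (g \<otimes> h) = ((ell g + ell h) mod int p + \<phi> c) mod int p"
      unfolding ell_def using \<phi>m Ag(1) Ah(1) c(1) subgroup.m_closed[OF D2_sg] by metis
    hence lgh: "ell (g \<otimes> h) = (ell g + ell h + F0) mod int p" using cF by (simp add: mod_simps)
    define S where "S = (\<Sum>i\<in>{1..d}. ((- KK d w (dv g) i) mod int p) * \<delta> i h)"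
    have Sm: "S mod int p = (- F0) mod int p" unfolding S_def F0_def
      using Smod[of "\<lambda>i. KK d w (dv g) i" "int p" "\<lambda>i. \<delta> i h" "{1..d}"] unfolding dv_def by simp
    have "fst (A_add p d (A_act p d \<delta> (\<tau> g) h) (\<tau> h)) = ((ell g - S) mod int p + ell h) mod int p"
      unfolding A_add_def A_act_def \<tau>_def S_def by simp
    also have "\<dots> = ((ell g + ell h) - S) mod int p" by (simp add: mod_simps algebra_simps)
    also have "\<dots> = ((ell g + ell h) - S mod int p) mod int p" by (simp add: mod_diff_right_eq)
    also have "\<dots> = ((ell g + ell h) - (- F0) mod int p) mod int p" using Sm by simp
    also have "\<dots> = (ell g + ell h + F0) mod int p" by (simp add: mod_diff_right_eq)
    finally have fst_eq: "fst (\<tau> (g \<otimes> h)) = fst (A_add p d (A_act p d \<delta> (\<tau> g) h) (\<tau> h))"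
      using lgh unfolding \<tau>_def by simp
    show "\<tau> (g \<otimes> h) = A_add p d (A_act p d \<delta> (\<tau> g) h) (\<tau> h)" using fst_eq snd_eq by (rule prod_eqI)
  qed
  have res: "\<forall>g\<in>frattini G. \<tau> g = \<sigma> g"
  proof
    fix g assume g: "g \<in> frattini G"
    have gD: "g \<in> D2" using g Phi_D2 by simp
    have gc: "g \<in> carrier G" using D2_c[OF gD] .
    have d0: "\<And>j. j \<in> {1..d} \<Longrightarrow> dv g j = 0" using gD D2_NN unfolding NN_def dv_def by auto
    have "s Ld (dv g) = \<one>" by (rule s_zero) (use d0 in auto)
    hence "ell g = fst (\<sigma> g)" unfolding ell_def A_def \<phi>_def using gc by simp
    moreover have "\<And>i. i \<in> {1..d} \<Longrightarrow> KK d w (dv g) i = 0" unfolding KK_def using d0 by auto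
    moreover have "snd (\<sigma> g) = (\<lambda>i. 0)" using sS[OF gD] unfolding S_carrier_def by auto
    ultimately show "\<tau> g = \<sigma> g" unfolding \<tau>_def by (intro prod_eqI) auto
  qed
  show ?thesis using der res by blast
qed

end


theorem lemma3p7:
  fixes G (structure) and p d :: nat and y :: "nat \<Rightarrow> 'g" and \<delta> :: "nat \<Rightarrow> 'g \<Rightarrow> int"
  assumes grp: "group G"
    and p: "Factorial_Ring.prime p" "odd p"
    and d: "d \<ge> 2"
    and fin: "finite (carrier G)"
    and pgrp: "\<exists>n. card (carrier G) = p ^ n"
    and expo: "\<forall>x\<in>carrier G. x [^] p = \<one>"
    and class2: "gamma3 G = {\<one>}" "gamma2 G \<noteq> {\<one>}"
    and gens: "y ` {1..d} \<subseteq> carrier G" "generate G (y ` {1..d}) = carrier G"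
    and frat: "card (rcosets (frattini G)) = p ^ d"
    and frat_g3: "card ((\<lambda>x. gamma3 G #> x) ` frattini G) = p ^ (d choose 2)"
    and delta: "\<forall>j\<in>{1..d}. (\<forall>g\<in>carrier G. \<delta> j g \<in> {0..<int p})
                  \<and> (\<forall>g\<in>carrier G. \<forall>h\<in>carrier G. \<delta> j (g \<otimes> h) = (\<delta> j g + \<delta> j h) mod int p)
                  \<and> (\<forall>i\<in>{1..d}. \<delta> j (y i) = (if i = j then 1 else 0))"
  shows "(\<forall>\<tau>. is_derivation G (carrier G) (A_carrier p d) (A_add p d) (A_act p d \<delta>) \<tau>
              \<longrightarrow> is_derivation G (frattini G) (S_carrier p d) (A_add p d) (\<lambda>u g. u) \<tau>)
       \<and> (\<forall>\<sigma>. is_derivation G (frattini G) (S_carrier p d) (A_add p d) (\<lambda>u g. u) \<sigma>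
              \<longrightarrow> (\<exists>\<tau>. is_derivation G (carrier G) (A_carrier p d) (A_add p d) (A_act p d \<delta>) \<tau>
                       \<and> (\<forall>g\<in>frattini G. \<tau> g = \<sigma> g)))"
  proof -
  interpret L37 G p d y \<delta>
    by (rule L37.intro[OF grp], rule L37_axioms.intro) (use p(1) fin expo class2(1) gens frat delta in simp_all)
  show ?thesis using part1 part2 by blast
qed

end
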